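(* Consider the Lorenz-Hamilton system on $\mathbb{R}^3$ $$\dot x_1=\tfrac12x_2,\qquad \dot x_2=-x_1x_3,\qquad \dot x_3=x_1x_2 ,$$ with equilibria $e_0=(0,0,0)$, $e_1^m=(m,0,0)$, $e_3^m=(0,0,m)$ for $m\in\mathbb{R}\setminus\{0\}$. Then: (i) $e_0$ and $e_1^m$ ($m\neq0$) are nonlinear stable; (ii) $e_3^m$ is nonlinear stable for $m>0$ and unstable for $m<0$.
   Context: Nonlinear stable means stable in the sense of Lyapunov: for every neighbourhood $U$ of the equilibrium there is a neighbourhood $V$ such that every trajectory starting in $V$ remains in $U$ for all $t\ge0$; unstable means not Lyapunov stable. *)

theory Defs
  imports "HOL-Analysis.Analysis"
begin

definition lorenz_hamilton :: "real^3 \<Rightarrow> real^3" where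
  "lorenz_hamilton x = vector [x$2 / 2, - (x$1 * x$3), x$1 * x$2]"

definition is_trajectory :: "(real^3 \<Rightarrow> real^3) \<Rightarrow> real \<Rightarrow> (real \<Rightarrow> real^3) \<Rightarrow> bool" where
  "is_trajectory f T x \<longleftrightarrow>
     (\<forall>t\<in>{0..T}. (x has_vector_derivative f (x t)) (at t within {0..T}))"

text \<open>Lyapunov (nonlinear) stability of e: for every neighbourhood U of e there is a
  neighbourhood V of e such that every trajectory starting in V stays in U for all
  t \<ge> 0 (for as long as it is defined, i.e. on every interval [0,T] on which it exists).\<close>
definition lyapunov_stable :: "(real^3 \<Rightarrow> real^3) \<Rightarrow> real^3 \<Rightarrow> bool" where
  "lyapunov_stable f e \<longleftrightarrow>
     (\<forall>U. open U \<and> e \<in> U \<longrightarrow>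
        (\<exists>V. open V \<and> e \<in> V \<and>
           (\<forall>T x. 0 \<le> T \<and> is_trajectory f T x \<and> x 0 \<in> V \<longrightarrow> (\<forall>t\<in>{0..T}. x t \<in> U))))"

end

theory Submission
  imports Defs
begin


lemma traj_comp:
  assumes "is_trajectory f T x" "t \<in> {0..T}"
  shows "((\<lambda>s. x s $ i) has_real_derivative (f (x t)) $ i) (at t within {0..T})"
  using bounded_linear.has_vector_derivative[OF bounded_linear_vec_nth, of x "f (x t)" "at t within {0..T}" i]
    assms unfolding is_trajectory_def has_real_derivative_iff_has_vector_derivative by auto

lemma traj_cont:
  assumes "is_trajectory f T x"
  shows "continuous_on {0..T} (\<lambda>s. x s $ i)"
  using traj_comp[OF assms] unfolding has_real_derivative_iff_has_vector_derivative
  by (intro continuous_on_vector_derivative) auto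

lemma conserved:
  assumes "is_trajectory lorenz_hamilton T x" "t \<in> {0..T}" "0 \<le> T"
  shows "(x t$2)^2 + (x t$3)^2 = (x 0$2)^2 + (x 0$3)^2 \<and> (x t$1)^2 - x t$3 = (x 0$1)^2 - x 0$3"
proof -
  have d: "\<And>s i. s \<in> {0..T} \<Longrightarrow> ((\<lambda>s. x s $ i) has_real_derivative (lorenz_hamilton (x s)) $ i) (at s within {0..T})"
    using traj_comp[OF assms(1)] by blast
  have "\<exists>c. \<forall>s\<in>{0..T}. (x s$2)^2 + (x s$3)^2 = c"
  proof (rule has_field_derivative_zero_constant)
    fix s assume s: "s \<in> {0..T}"
    show "((\<lambda>s. (x s$2)^2 + (x s$3)^2) has_field_derivative 0) (at s within {0..T})"
      using d[OF s, of 2] d[OF s, of 3]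
      by (auto intro!: derivative_eq_intros simp: lorenz_hamilton_def algebra_simps)
  qed auto
  moreover have "\<exists>c. \<forall>s\<in>{0..T}. (x s$1)^2 - x s$3 = c"
  proof (rule has_field_derivative_zero_constant)
    fix s assume s: "s \<in> {0..T}"
    show "((\<lambda>s. (x s$1)^2 - x s$3) has_field_derivative 0) (at s within {0..T})"
      using d[OF s, of 1] d[OF s, of 3]
      by (auto intro!: derivative_eq_intros simp: lorenz_hamilton_def algebra_simps)
  qed auto
  ultimately show ?thesis using assms by force
qed



lemma sq_lt: "0 \<le> (e::real) \<Longrightarrow> y^2 < e^2 \<Longrightarrow> \<bar>y\<bar> < e"
  by (metis abs_ge_zero power2_abs power_less_imp_less_base)
lemma lt_sq: "\<bar>y::real\<bar> < d \<Longrightarrow> y^2 < d^2"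
  by (metis abs_ge_zero power2_abs power_strict_mono zero_less_numeral)

lemma A_core:
  fixes a b c p q r d e :: real
  assumes d: "0 < d" "d \<le> 1" "2*d \<le> e" "4*d \<le> e^2"
    and h: "\<bar>a\<bar> < d" "\<bar>b\<bar> < d" "\<bar>c\<bar> < d" "q^2+r^2 = b^2+c^2" "p^2 - r = a^2 - c"
  shows "\<bar>p\<bar> < e \<and> \<bar>q\<bar> < e \<and> \<bar>r\<bar> < e"
proof -
  have b2: "b^2 < d^2" "c^2 < d^2" "a^2 < d^2" using lt_sq h by auto
  have "q^2 < (2*d)^2" "r^2 < (2*d)^2" using b2 h(4) d(1)
    by (auto simp: power2_eq_square) (smt (verit) mult_pos_pos zero_le_square)+
  hence qr: "\<bar>q\<bar> < 2*d" "\<bar>r\<bar> < 2*d" using sq_lt d(1) by auto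
  have "d^2 \<le> d" using d by (simp add: power2_eq_square mult_le_cancel_left1)
  hence "p^2 < 4*d" using h(5) b2 qr h(3) by (smt (verit))
  hence "p^2 < e^2" using d by linarith
  hence "\<bar>p\<bar> < e" using sq_lt d by auto
  thus ?thesis using qr d by auto
qed

lemma B_core:
  fixes a b c p q r d e m :: real
  assumes m: "m \<noteq> 0" and d: "0 < d" "d \<le> 1" "2*d \<le> e" "2*d \<le> \<bar>m\<bar>"
      "2*d*(2*\<bar>m\<bar>+4) \<le> m^2" "d*(2*\<bar>m\<bar>+4) \<le> e*\<bar>m\<bar>"
    and h: "\<bar>a - m\<bar> < d" "\<bar>b\<bar> < d" "\<bar>c\<bar> < d" "q^2+r^2 = b^2+c^2" "p^2 - r = a^2 - c"
  shows "\<bar>q\<bar> < e \<and> \<bar>r\<bar> < e \<and> m^2/2 < p^2 \<and> (0 < m*p \<longrightarrow> \<bar>p - m\<bar> < e) \<and> 0 < m * a"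
proof -
  have b2: "b^2 < d^2" "c^2 < d^2" using lt_sq h by auto
  have "q^2 < (2*d)^2" "r^2 < (2*d)^2" using b2 h(4) d(1)
    by (auto simp: power2_eq_square) (smt (verit) mult_pos_pos zero_le_square)+
  hence qr: "\<bar>q\<bar> < 2*d" "\<bar>r\<bar> < 2*d" using sq_lt d(1) by auto
  have "\<bar>a + m\<bar> \<le> 2*\<bar>m\<bar> + 1" using h(1) d by linarith
  hence "\<bar>a - m\<bar> * \<bar>a + m\<bar> \<le> d * (2*\<bar>m\<bar> + 1)" using h(1)
    by (intro mult_mono) auto
  hence am: "\<bar>a^2 - m^2\<bar> \<le> d * (2*\<bar>m\<bar> + 1)"
    by (simp add: abs_mult[symmetric] power2_eq_square algebra_simps)
  have pm: "\<bar>p^2 - m^2\<bar> < d*(2*\<bar>m\<bar>+4)" using am h(3,5) qr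
    by (simp add: algebra_simps)
  have "2*(d*(2*\<bar>m\<bar>+4)) \<le> m^2" using d(5) by (simp add: mult.assoc)
  hence g1: "m^2/2 < p^2" using pm by linarith
  have g2: "\<bar>p - m\<bar> < e" if mp: "0 < m*p"
  proof -
    have mpos: "0 < \<bar>m\<bar>" using m by simp
    have "\<bar>m\<bar> \<le> \<bar>p + m\<bar>" using mp
      by (auto simp: zero_less_mult_iff)
    hence "\<bar>p - m\<bar> * \<bar>m\<bar> \<le> \<bar>p - m\<bar> * \<bar>p + m\<bar>" by (simp add: mult_left_mono)
    also have "\<dots> = \<bar>p^2 - m^2\<bar>" by (simp add: abs_mult[symmetric] power2_eq_square algebra_simps)
    also have "\<dots> < e * \<bar>m\<bar>" using pm d(6) by linarith
    finally show ?thesis using mpos by (simp add: mult_less_cancel_right)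
  qed
  have g3: "0 < m * a"
  proof -
    have "\<bar>a - m\<bar> < \<bar>m\<bar>" using h(1) d by linarith
    hence "\<bar>m\<bar> * \<bar>a - m\<bar> < \<bar>m\<bar> * \<bar>m\<bar>" using m by (intro mult_strict_left_mono) auto
    hence "\<bar>m * (a - m)\<bar> < \<bar>m\<bar> * \<bar>m\<bar>" by (simp add: abs_mult)
    hence "\<bar>m * (a - m)\<bar> < m*m" by (simp add: abs_mult_self_eq)
    thus ?thesis by (simp add: algebra_simps)
  qed
  show ?thesis using g1 g2 g3 qr d by auto
qed



lemma C_core:
  fixes a b c p q r d e m :: real
  assumes m: "0 < m" and d: "0 < d" "d \<le> 1" "4*d \<le> m" "2*d \<le> e" "d*(2*m+2) \<le> e*m"
      "3*(d*(2*m+2)) \<le> e^2*m" "3*d \<le> e^2" "d*(2*m+3) \<le> e"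
    and h: "\<bar>a\<bar> < d" "\<bar>b\<bar> < d" "\<bar>c - m\<bar> < d" "q^2+r^2 = b^2+c^2" "p^2 - r = a^2 - c"
  shows "\<bar>p\<bar> < e \<and> \<bar>q\<bar> < e \<and> \<bar>r - m\<bar> < e"
proof -
  have a2: "a^2 < d^2" "b^2 < d^2" using lt_sq h by auto
  have dd: "d^2 \<le> d" using d by (simp add: power2_eq_square mult_le_cancel_left1)
  have r1: "r = p^2 - a^2 + c" using h(5) by simp
  have rlow: "r > c - d^2" using r1 a2 zero_le_power2[of p] by linarith
  have c1: "m - d < c" "c < m + d" using h(3) by auto
  have cpos: "0 < c - d^2" using c1 dd d by linarith
  have rpos: "0 < r" "r - m > - 2*d" using rlow cpos c1 dd by linarith+
  have "c^2 < (m+d)^2" using c1 cpos dd d by (intro power_strict_mono) auto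
  moreover have "(m+d)^2 = m^2 + 2*m*d + d^2" by (simp add: power2_eq_square algebra_simps)
  ultimately have "r^2 < m^2 + 2*m*d + 2*d" using h(4) a2 dd zero_le_power2[of q] by linarith
  moreover have "(r - m)*(r+m) = r^2 - m^2" "d*(2*m+2) = 2*m*d + 2*d" by (simp_all add: power2_eq_square algebra_simps)
  ultimately have rr: "(r - m)*(r+m) < d*(2*m+2)" by linarith
  have R: "(r - m)*m < d*(2*m+2)"
  proof (cases "r \<le> m")
    case True
    hence "(r-m)*m \<le> 0" using m by (simp add: mult_nonpos_nonneg)
    moreover have "0 < d*(2*m+2)" using d m by simp
    ultimately show ?thesis by linarith
  next
    case False
    hence "(r-m)*m \<le> (r-m)*(r+m)" using rpos by (intro mult_left_mono) auto
    thus ?thesis using rr by linarith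
  qed
  have "(r - m)*m < e*m" using R d(5) by linarith
  hence "r - m < e" using m by simp
  hence g1: "\<bar>r - m\<bar> < e" using rpos d by linarith
  have "3*((r - m)*m) < e^2*m" using R d(6) by linarith
  hence "3*(r-m) < e^2" using m by (simp add: mult.assoc[symmetric])
  hence "3*r - 3*m < e^2" by (simp add: algebra_simps)
  hence "p^2 < e^2" using r1 a2 dd c1 d(7) by linarith
  hence g2: "\<bar>p\<bar> < e" using sq_lt d by auto
  have "(c - d^2)^2 < r^2" using rlow cpos by (intro power_strict_mono) auto
  moreover have "(c - d^2)^2 = c^2 - 2*c*d^2 + d^2*d^2" by (simp add: power2_eq_square algebra_simps)
  moreover have "0 \<le> d^2*d^2" by simp
  ultimately have "q^2 < d^2 + 2*c*d^2" using h(4) a2 by linarith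
  also have "\<dots> \<le> d^2 + 2*(m+1)*d^2" using c1 d by (intro add_left_mono mult_right_mono) auto
  also have "\<dots> = d * (d*(2*m+3))" by (simp add: power2_eq_square algebra_simps)
  also have "\<dots> \<le> d * e" using d by (intro mult_left_mono) auto
  also have "\<dots> \<le> e * e" using d by (intro mult_right_mono) auto
  finally have "q^2 < e^2" by (simp add: power2_eq_square)
  hence g3: "\<bar>q\<bar> < e" using sq_lt d by auto
  show ?thesis using g1 g2 g3 by auto
qed



lemma vec3_deriv:
  assumes "(f1 has_real_derivative d1) (at t within S)" "(f2 has_real_derivative d2) (at t within S)"
    "(f3 has_real_derivative d3) (at t within S)"
  shows "((\<lambda>t. vector [f1 t, f2 t, f3 t] :: real^3) has_vector_derivative vector [d1,d2,d3]) (at t within S)"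
proof -
  have eq: "(\<lambda>t. vector [f1 t, f2 t, f3 t] :: real^3) =
    (\<lambda>t. f1 t *\<^sub>R vector[1,0,0] + f2 t *\<^sub>R vector[0,1,0] + f3 t *\<^sub>R vector[0,0,1])"
    by (auto simp: vec_eq_iff forall_3)
  have "((\<lambda>t. f1 t *\<^sub>R (vector[1,0,0]::real^3) + f2 t *\<^sub>R vector[0,1,0] + f3 t *\<^sub>R vector[0,0,1])
     has_vector_derivative (d1 *\<^sub>R vector[1,0,0] + d2 *\<^sub>R vector[0,1,0] + d3 *\<^sub>R vector[0,0,1])) (at t within S)"
    using assms by (auto intro!: derivative_eq_intros)
  moreover have "(d1 *\<^sub>R vector[1,0,0] + d2 *\<^sub>R vector[0,1,0] + d3 *\<^sub>R vector[0,0,1]) = (vector [d1,d2,d3] :: real^3)"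
    by (auto simp: vec_eq_iff forall_3)
  ultimately show ?thesis unfolding eq by simp
qed

lemma d1: "((\<lambda>t. A / cosh (s0 + A/2*t)) has_real_derivative
   (- (A^2 * sinh (s0 + A/2*t) / (cosh (s0 + A/2*t))^2)) / 2) (at t)"
  by (auto intro!: derivative_eq_intros simp: field_simps power2_eq_square)

lemma d2: "((\<lambda>t. - (A^2 * sinh (s0 + A/2*t) / (cosh (s0 + A/2*t))^2)) has_real_derivative
   - ((A / cosh (s0 + A/2*t)) * (A^2 / (cosh (s0 + A/2*t))^2 - A^2/2))) (at t)"
proof -
  have sq: "sinh x ^ 2 = cosh x ^ 2 - 1" for x :: real by (simp add: cosh_square_eq)
  show ?thesis
    apply (auto intro!: derivative_eq_intros simp: field_simps sq)
    using sq[of "(A * t + s0 * 2) / 2"] by algebra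
qed

lemma d3: "((\<lambda>t. A^2 / (cosh (s0 + A/2*t))^2 - A^2/2) has_real_derivative
   (A / cosh (s0 + A/2*t)) * (- (A^2 * sinh (s0 + A/2*t) / (cosh (s0 + A/2*t))^2))) (at t)"
  by (auto intro!: derivative_eq_intros simp: field_simps power2_eq_square)


lemma stable_from:
  assumes H: "\<And>\<epsilon>. 0 < \<epsilon> \<Longrightarrow> \<exists>\<delta>>0. \<forall>T x. 0 \<le> T \<and> is_trajectory f T x \<and> (\<forall>i. \<bar>x 0$i - e$i\<bar> < \<delta>)
       \<longrightarrow> (\<forall>t\<in>{0..T}. \<forall>i. \<bar>x t$i - e$i\<bar> < \<epsilon>)"
  shows "lyapunov_stable f (e::real^3)"
  unfolding lyapunov_stable_def
proof (intro allI impI)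
  fix U assume U: "open U \<and> e \<in> U"
  then obtain \<epsilon> where \<epsilon>: "\<epsilon>>0" "ball e \<epsilon> \<subseteq> U" using open_contains_ball by blast
  obtain \<delta> where \<delta>: "\<delta>>0" and H\<delta>: "\<forall>T x. 0 \<le> T \<and> is_trajectory f T x \<and> (\<forall>i. \<bar>x 0$i - e$i\<bar> < \<delta>)
       \<longrightarrow> (\<forall>t\<in>{0..T}. \<forall>i. \<bar>x t$i - e$i\<bar> < \<epsilon>/3)"
    using H[of "\<epsilon>/3"] \<epsilon> by auto
  show "\<exists>V. open V \<and> e \<in> V \<and> (\<forall>T x. 0 \<le> T \<and> is_trajectory f T x \<and> x 0 \<in> V \<longrightarrow> (\<forall>t\<in>{0..T}. x t \<in> U))"
  proof (intro exI[of _ "ball e \<delta>"] conjI allI impI ballI)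
    show "open (ball e \<delta>)" by simp
    show "e \<in> ball e \<delta>" using \<delta> by simp
    fix T x t assume a: "0 \<le> T \<and> is_trajectory f T x \<and> x 0 \<in> ball e \<delta>" and t: "t\<in>{0..T}"
    have "\<forall>i. \<bar>x 0$i - e$i\<bar> < \<delta>"
    proof
      fix i
      have "\<bar>x 0$i - e$i\<bar> = \<bar>(x 0 - e)$i\<bar>" by simp
      also have "\<dots> \<le> norm (x 0 - e)" by (rule component_le_norm_cart)
      also have "\<dots> < \<delta>" using a by (simp add: dist_norm norm_minus_commute)
      finally show "\<bar>x 0$i - e$i\<bar> < \<delta>" .
    qed
    hence c: "\<forall>i. \<bar>x t$i - e$i\<bar> < \<epsilon>/3" using H\<delta> a t by blast
    have "norm (x t - e) \<le> (\<Sum>i\<in>UNIV. \<bar>(x t - e)$i\<bar>)" by (rule norm_le_l1_cart)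
    also have "\<dots> < \<epsilon>" using c[rule_format, of 1] c[rule_format, of 2] c[rule_format, of 3]
      by (simp add: sum_3)
    finally show "x t \<in> U" using \<epsilon> by (auto simp: dist_norm norm_minus_commute)
  qed
qed

lemma stable_e0: "lyapunov_stable lorenz_hamilton (vector [0,0,0])"
proof (rule stable_from)
  fix \<epsilon> :: real assume \<epsilon>: "0<\<epsilon>"
  define d where "d = min (\<epsilon>/2) (min 1 (\<epsilon>^2/4))"
  have d: "0<d" "d\<le>1" "2*d \<le> \<epsilon>" "4*d \<le> \<epsilon>^2" using \<epsilon> by (auto simp: d_def)
  show "\<exists>\<delta>>0. \<forall>T x. 0 \<le> T \<and> is_trajectory lorenz_hamilton T x \<and> (\<forall>i. \<bar>x 0$i - vector [0,0,0]$i\<bar> < \<delta>)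
       \<longrightarrow> (\<forall>t\<in>{0..T}. \<forall>i. \<bar>x t$i - vector [0,0,0]$i\<bar> < \<epsilon>)"
  proof (intro exI[of _ d] conjI allI impI ballI)
    show "0<d" by fact
    fix T x t i assume a: "0 \<le> T \<and> is_trajectory lorenz_hamilton T x \<and> (\<forall>i. \<bar>x 0$i - vector [0,0,0]$i\<bar> < d)"
      and t: "t\<in>{0..T}"
    have h0: "\<bar>x 0$1\<bar> < d" "\<bar>x 0$2\<bar> < d" "\<bar>x 0$3\<bar> < d"
      using a[THEN conjunct2, THEN conjunct2, rule_format, of 1]
        a[THEN conjunct2, THEN conjunct2, rule_format, of 2]
        a[THEN conjunct2, THEN conjunct2, rule_format, of 3] by simp_all
    have cs: "(x t$2)^2 + (x t$3)^2 = (x 0$2)^2 + (x 0$3)^2" "(x t$1)^2 - x t$3 = (x 0$1)^2 - x 0$3"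
      using conserved[of T x t] a t by auto
    have "\<bar>x t$1\<bar> < \<epsilon> \<and> \<bar>x t$2\<bar> < \<epsilon> \<and> \<bar>x t$3\<bar> < \<epsilon>"
      by (rule A_core[OF d h0 cs])
    thus "\<bar>x t$i - vector [0,0,0]$i\<bar> < \<epsilon>" using exhaust_3[of i] by auto
  qed
qed

lemma stable_e1:
  assumes m: "m \<noteq> 0"
  shows "lyapunov_stable lorenz_hamilton (vector [m,0,0])"
proof (rule stable_from)
  fix \<epsilon> :: real assume \<epsilon>: "0<\<epsilon>"
  define d where "d = min (min 1 (\<epsilon>/2)) (min (\<bar>m\<bar>/2) (min (m^2/(2*(2*\<bar>m\<bar>+4))) (\<epsilon>*\<bar>m\<bar>/(2*\<bar>m\<bar>+4))))"
  have mp: "0 < \<bar>m\<bar>" "0 < 2*\<bar>m\<bar>+4" "0 < 2*(2*\<bar>m\<bar>+4)" "0 < m^2" using m by auto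
  have dd: "d \<le> \<epsilon>/2" "d \<le> \<bar>m\<bar>/2" unfolding d_def
    by (rule order_trans[OF min.cobounded1 min.cobounded2], rule order_trans[OF min.cobounded2 min.cobounded1])
  have d01: "0<d" "d\<le>1" using \<epsilon> mp by (auto simp: d_def min_le_iff_disj)
  have d0: "0<d" "d\<le>1" "2*d \<le> \<epsilon>" "2*d \<le> \<bar>m\<bar>" using d01 dd by linarith+
  have "d \<le> m^2/(2*(2*\<bar>m\<bar>+4))" by (simp add: d_def min_le_iff_disj)
  hence d5: "2*d*(2*\<bar>m\<bar>+4) \<le> m^2" using mp by (simp add: pos_le_divide_eq algebra_simps)
  have "d \<le> \<epsilon>*\<bar>m\<bar>/(2*\<bar>m\<bar>+4)" by (simp add: d_def min_le_iff_disj)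
  hence d6: "d*(2*\<bar>m\<bar>+4) \<le> \<epsilon>*\<bar>m\<bar>" using mp by (simp add: pos_le_divide_eq algebra_simps)
  note d = d0 d5 d6
  show "\<exists>\<delta>>0. \<forall>T x. 0 \<le> T \<and> is_trajectory lorenz_hamilton T x \<and> (\<forall>i. \<bar>x 0$i - vector [m,0,0]$i\<bar> < \<delta>)
       \<longrightarrow> (\<forall>t\<in>{0..T}. \<forall>i. \<bar>x t$i - vector [m,0,0]$i\<bar> < \<epsilon>)"
  proof (intro exI[of _ d] conjI allI impI ballI)
    show "0<d" by fact
    fix T x t i assume a: "0 \<le> T \<and> is_trajectory lorenz_hamilton T x \<and> (\<forall>i. \<bar>x 0$i - vector [m,0,0]$i\<bar> < d)"
      and t: "t\<in>{0..T}"
    have h0: "\<bar>x 0$1 - m\<bar> < d" "\<bar>x 0$2\<bar> < d" "\<bar>x 0$3\<bar> < d"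
      using a[THEN conjunct2, THEN conjunct2, rule_format, of 1]
        a[THEN conjunct2, THEN conjunct2, rule_format, of 2]
        a[THEN conjunct2, THEN conjunct2, rule_format, of 3] by simp_all
    have B: "\<bar>x s$2\<bar> < \<epsilon> \<and> \<bar>x s$3\<bar> < \<epsilon> \<and> m^2/2 < (x s$1)^2 \<and> (0 < m*x s$1 \<longrightarrow> \<bar>x s$1 - m\<bar> < \<epsilon>) \<and> 0 < m * x 0$1"
      if s: "s \<in> {0..T}" for s
    proof -
      have cs: "(x s$2)^2 + (x s$3)^2 = (x 0$2)^2 + (x 0$3)^2" "(x s$1)^2 - x s$3 = (x 0$1)^2 - x 0$3"
        using conserved[of T x s] a s by auto
      show ?thesis by (rule B_core[OF m d h0 cs])
    qed
    have pos: "0 < m * x t$1"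
    proof (rule ccontr)
      assume n: "\<not> 0 < m * x t$1"
      have cont: "continuous_on {0..t} (\<lambda>s. m * x s$1)"
      proof -
        have "continuous_on {0..t} (\<lambda>s. x s$1)"
          using a t by (intro continuous_on_subset[OF traj_cont[of lorenz_hamilton T x 1]]) auto
        thus ?thesis by (rule continuous_on_mult_left)
      qed
      have "0 < m * x 0$1" using B[OF t] by blast
      then obtain s where s: "0 \<le> s" "s \<le> t" "m * x s$1 = 0"
        using IVT2'[of "\<lambda>s. m * x s$1" t 0 0] n t cont by auto
      hence "s \<in> {0..T}" using t by auto
      from B[OF this] have "m^2/2 < (x s$1)^2" by blast
      thus False using s(3) m by (auto simp: power2_eq_square)
    qed
    show "\<bar>x t$i - vector [m,0,0]$i\<bar> < \<epsilon>" using exhaust_3[of i] B[OF t] pos by auto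
  qed
qed

lemma stable_e3:
  assumes m: "0 < m"
  shows "lyapunov_stable lorenz_hamilton (vector [0,0,m])"
proof (rule stable_from)
  fix \<epsilon> :: real assume \<epsilon>: "0<\<epsilon>"
  define d where "d = min (min (min 1 (m/4)) (min (\<epsilon>/2) (\<epsilon>*m/(2*m+2))))
     (min (min (\<epsilon>^2*m/(3*(2*m+2))) (\<epsilon>^2/3)) (\<epsilon>/(2*m+3)))"
  have mp: "0 < 2*m+2" "0 < 3*(2*m+2)" "0 < 2*m+3" using m by auto
  have d0: "0<d" "d\<le>1" "4*d \<le> m" "2*d \<le> \<epsilon>" "3*d \<le> \<epsilon>^2" using \<epsilon> m mp by (auto simp: d_def)
  have "d \<le> \<epsilon>*m/(2*m+2)" by (simp add: d_def min_le_iff_disj)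
  hence d5: "d*(2*m+2) \<le> \<epsilon>*m" using mp by (simp add: pos_le_divide_eq)
  have "d \<le> \<epsilon>^2*m/(3*(2*m+2))" by (simp add: d_def min_le_iff_disj)
  hence d6: "3*(d*(2*m+2)) \<le> \<epsilon>^2*m" using mp by (simp add: pos_le_divide_eq algebra_simps)
  have "d \<le> \<epsilon>/(2*m+3)" by (simp add: d_def min_le_iff_disj)
  hence d7: "d*(2*m+3) \<le> \<epsilon>" using mp by (simp add: pos_le_divide_eq)
  show "\<exists>\<delta>>0. \<forall>T x. 0 \<le> T \<and> is_trajectory lorenz_hamilton T x \<and> (\<forall>i. \<bar>x 0$i - vector [0,0,m]$i\<bar> < \<delta>)
       \<longrightarrow> (\<forall>t\<in>{0..T}. \<forall>i. \<bar>x t$i - vector [0,0,m]$i\<bar> < \<epsilon>)"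
  proof (intro exI[of _ d] conjI allI impI ballI)
    show "0<d" by fact
    fix T x t i assume a: "0 \<le> T \<and> is_trajectory lorenz_hamilton T x \<and> (\<forall>i. \<bar>x 0$i - vector [0,0,m]$i\<bar> < d)"
      and t: "t\<in>{0..T}"
    have h0: "\<bar>x 0$1\<bar> < d" "\<bar>x 0$2\<bar> < d" "\<bar>x 0$3 - m\<bar> < d"
      using a[THEN conjunct2, THEN conjunct2, rule_format, of 1]
        a[THEN conjunct2, THEN conjunct2, rule_format, of 2]
        a[THEN conjunct2, THEN conjunct2, rule_format, of 3] by simp_all
    have cs: "(x t$2)^2 + (x t$3)^2 = (x 0$2)^2 + (x 0$3)^2" "(x t$1)^2 - x t$3 = (x 0$1)^2 - x 0$3"
      using conserved[of T x t] a t by auto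
    have "\<bar>x t$1\<bar> < \<epsilon> \<and> \<bar>x t$2\<bar> < \<epsilon> \<and> \<bar>x t$3 - m\<bar> < \<epsilon>"
      by (rule C_core[OF m d0(1,2,3,4) d5 d6 d0(5) d7 h0 cs])
    thus "\<bar>x t$i - vector [0,0,m]$i\<bar> < \<epsilon>" using exhaust_3[of i] by auto
  qed
qed

lemma lh_vec: "lorenz_hamilton (vector [a,b,c]) = vector [b/2, -(a*c), a*b]"
  by (simp add: lorenz_hamilton_def)

lemma traj_explicit:
  fixes A s0 T :: real
  defines "f1 \<equiv> \<lambda>t. A / cosh (s0 + A/2*t)"
    and "f2 \<equiv> \<lambda>t. - (A^2 * sinh (s0 + A/2*t) / (cosh (s0 + A/2*t))^2)"
    and "f3 \<equiv> \<lambda>t. A^2 / (cosh (s0 + A/2*t))^2 - A^2/2"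
  shows "is_trajectory lorenz_hamilton T (\<lambda>t. vector [f1 t, f2 t, f3 t])"
  unfolding is_trajectory_def lh_vec
proof
  fix t assume "t \<in> {0..T}"
  show "((\<lambda>t. vector [f1 t, f2 t, f3 t] :: real^3) has_vector_derivative vector [f2 t / 2, -(f1 t * f3 t), f1 t * f2 t]) (at t within {0..T})"
    unfolding f1_def f2_def f3_def
    by (rule vec3_deriv[OF has_field_derivative_at_within[OF d1] has_field_derivative_at_within[OF d2]
       has_field_derivative_at_within[OF d3]])
qed

lemma unstable_e3:
  assumes m: "m < 0"
  shows "\<not> lyapunov_stable lorenz_hamilton (vector [0,0,m])"
proof
  define e :: "real^3" where "e = vector [0,0,m]"
  define A where "A = sqrt (-2*m)"
  have A: "0 < A" "A^2 = -2*m" using m by (auto simp: A_def)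
  hence mA: "m = -(A^2/2)" by simp
  assume "lyapunov_stable lorenz_hamilton (vector [0,0,m])"
  hence "\<exists>V. open V \<and> e \<in> V \<and> (\<forall>T x. 0 \<le> T \<and> is_trajectory lorenz_hamilton T x \<and> x 0 \<in> V \<longrightarrow>
      (\<forall>t\<in>{0..T}. x t \<in> ball e (A^2/2)))"
    unfolding lyapunov_stable_def e_def using A m by (auto dest!: spec[of _ "ball (vector [0,0,m]) (A^2/2)"])
  then obtain V where V: "open V" "e \<in> V" and HV: "\<And>T x t. 0 \<le> T \<Longrightarrow> is_trajectory lorenz_hamilton T x \<Longrightarrow> x 0 \<in> V \<Longrightarrow>
      t\<in>{0..T} \<Longrightarrow> x t \<in> ball e (A^2/2)" by blast
  obtain \<delta> where \<delta>: "\<delta> > 0" "ball e \<delta> \<subseteq> V" using V open_contains_ball by blast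
  define K where "K = A + 2*A^2"
  have "0 < A^2" using A(1) by simp
  hence K: "0 < K" using A(1) unfolding K_def by linarith
  define s0 where "s0 = -(2*K/\<delta>)"
  have s0: "s0 \<le> 0" using K \<delta> by (simp add: s0_def)
  define X where "X = (\<lambda>t. vector [A / cosh (s0 + A/2*t), - (A^2 * sinh (s0 + A/2*t) / (cosh (s0 + A/2*t))^2),
      A^2 / (cosh (s0 + A/2*t))^2 - A^2/2] :: real^3)"
  define T where "T = -2 * s0 / A"
  have T: "0 \<le> T" using s0 A(1) by (simp add: T_def divide_nonpos_pos)
  have traj: "is_trajectory lorenz_hamilton T X"
    using traj_explicit[of T A s0] unfolding X_def by simp
  define c where "c = cosh s0"
  have c1: "1 \<le> c" by (simp add: c_def cosh_real_ge_1)
  have "exp (-s0) \<le> exp s0 + exp (-s0)" by simp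
  hence "exp (-s0) / 2 \<le> c" by (simp add: c_def cosh_field_def)
  moreover have "1 - s0 \<le> exp (-s0)" using exp_ge_add_one_self[of "-s0"] by simp
  ultimately have "(1 - s0)/2 \<le> c" using divide_right_mono[of "1 - s0" "exp (-s0)" 2] by linarith
  hence cK: "K/\<delta> < c" using \<delta> by (simp add: s0_def)
  hence cK2: "K < c * \<delta>" using \<delta> by (simp add: pos_divide_less_eq)
  have sh: "\<bar>sinh s0\<bar> \<le> c" using sinh_le_cosh_real[of s0] sinh_le_cosh_real[of "-s0"] by (simp add: c_def abs_if)
  have x0: "X 0 - e = vector [A / c, - (A^2 * sinh s0 / c^2), A^2/c^2]"
    by (simp add: X_def e_def c_def vec_eq_iff forall_3 mA)
  have cpos: "0 < c" using c1 by simp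
  have b1: "\<bar>A / c\<bar> = A / c" using A cpos by simp
  have b2: "\<bar>- (A^2 * sinh s0 / c^2)\<bar> \<le> A^2 / c"
  proof -
    have "\<bar>- (A^2 * sinh s0 / c^2)\<bar> = A^2 * \<bar>sinh s0\<bar> / c^2" using cpos by (simp add: abs_mult)
    also have "\<dots> \<le> A^2 * c / c^2" using sh by (intro divide_right_mono mult_left_mono) auto
    also have "\<dots> = A^2 / c" using cpos by (simp add: power2_eq_square)
    finally show ?thesis .
  qed
  have b3: "\<bar>A^2/c^2\<bar> \<le> A^2 / c"
  proof -
    have "\<bar>A^2/c^2\<bar> = A^2/(c*c)" by (simp add: power2_eq_square)
    also have "\<dots> \<le> A^2 / c" using c1 cpos by (intro divide_left_mono) auto
    finally show ?thesis .
  qed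
  have "norm (X 0 - e) \<le> (\<Sum>i\<in>UNIV. \<bar>(X 0 - e)$i\<bar>)" by (rule norm_le_l1_cart)
  also have "\<dots> \<le> A/c + A^2/c + A^2/c" unfolding x0 using b1 b2 b3 by (simp add: sum_3)
  also have "\<dots> = K / c" by (simp add: K_def add_divide_distrib)
  also have "\<dots> < \<delta>" using cK2 cpos by (simp add: pos_divide_less_eq mult.commute)
  finally have "X 0 \<in> ball e \<delta>" by (simp add: dist_norm norm_minus_commute)
  hence X0: "X 0 \<in> V" using \<delta> by auto
  have "X T \<in> ball e (A^2/2)" using HV[OF T traj X0, of T] T by auto
  moreover have "s0 + A/2*T = 0" using A by (simp add: T_def)
  hence "(X T - e)$3 = A^2" by (simp add: X_def e_def mA)
  hence "A^2 \<le> norm (X T - e)" using component_le_norm_cart[of "X T - e" 3] A by simp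
  ultimately show False using A m by (simp add: dist_norm norm_minus_commute)
qed



theorem corollary4p5:
  shows "lyapunov_stable lorenz_hamilton (vector [0, 0, 0])
    \<and> (\<forall>m::real. m \<noteq> 0 \<longrightarrow> lyapunov_stable lorenz_hamilton (vector [m, 0, 0]))
    \<and> (\<forall>m::real. m > 0 \<longrightarrow> lyapunov_stable lorenz_hamilton (vector [0, 0, m]))
    \<and> (\<forall>m::real. m < 0 \<longrightarrow> \<not> lyapunov_stable lorenz_hamilton (vector [0, 0, m]))"
  using stable_e0 stable_e1 stable_e3 unstable_e3 by blast

end
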